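(* For every positive integer $n$, $$(2x+1)\sum_{k=1}^nk(k+1)(2k+1)(-1)^{n-k}w_k(x)^2=n(n+1)(n+2)w_n(x)w_{n+1}(x),$$ where $w_m(x)=\sum_{k=1}^m w(m,k)x^{k-1}$ with $w(m,k)=\frac1k\binom{m-1}{k-1}\binom{m+k}{k-1}$.
   Context: The identity is an identity of polynomials in $x$. *)

theory Defs
  imports "HOL-Computational_Algebra.Polynomial"
begin

definition wcoef :: "nat \<Rightarrow> nat \<Rightarrow> rat" where
  "wcoef m k = (1 / of_nat k) * of_nat ((m - 1) choose (k - 1)) * of_nat ((m + k) choose (k - 1))"

definition wpoly :: "nat \<Rightarrow> rat poly" where
  "wpoly m = (\<Sum>k = 1..m. monom (wcoef m k) (k - 1))"

end

theory Submission
  imports Defs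
begin

definition PP :: "rat \<Rightarrow> rat \<Rightarrow> nat \<Rightarrow> rat" where
  "PP x c j = (\<Prod>i = 0..<j. x + c - of_nat i)"

lemma PP_Suc1: "PP x c (Suc j) = PP x c j * (x + c - of_nat j)"
  by (simp add: PP_def)

lemma PP_Suc2: "PP x c (Suc j) = (x + c) * PP x (c - 1) j"
  unfolding PP_def by (subst prod.atLeast0_lessThan_Suc_shift) (simp add: algebra_simps)

lemma PP_0[simp]: "PP x c 0 = 1" by (simp add: PP_def)

lemma choose_PP: "of_nat (N choose j) * fact j = PP x c j" if "of_nat N = x + c"
  using that by (simp add: binomial_gbinomial gbinomial_mult_fact' PP_def)

lemma wcoef_PP:
  assumes "m \<ge> 1"
  shows "wcoef m (j+1) * (fact (j+1) * fact j) = PP (of_nat m) (-1) j * PP (of_nat m) (of_nat j + 1) j"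
proof -
  have a: "of_nat ((m-1) choose j) * fact j = PP (of_nat m) (-1) j"
    by (rule choose_PP) (use assms in \<open>simp add: of_nat_diff\<close>)
  have b: "of_nat ((m+(j+1)) choose j) * fact j = PP (of_nat m) (of_nat j + 1) j"
    by (rule choose_PP) simp
  have "wcoef m (j+1) * (fact (j+1) * fact j) =
     (of_nat ((m-1) choose j) * fact j) * (of_nat ((m+(j+1)) choose j) * fact j)"
    unfolding wcoef_def by (simp add: field_simps)
  then show ?thesis by (simp only: a[symmetric] b[symmetric] mult_ac)
qed

lemma coeff_wpoly:
  assumes "m \<ge> 1"
  shows "coeff (wpoly m) j = wcoef m (j+1)"
proof -
  have "coeff (wpoly m) j = (\<Sum>k = 1..m. if k = j + 1 then wcoef m k else 0)"
    unfolding wpoly_def coeff_sum coeff_monom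
    by (rule sum.cong) auto
  also have "\<dots> = (if j + 1 \<in> {1..m} then wcoef m (j+1) else 0)"
    by (simp add: sum.delta')
  also have "\<dots> = wcoef m (j+1)"
    using assms by (auto simp: wcoef_def)
  finally show ?thesis .
qed

lemma PP_shift: "PP (x + a) c j = PP x (a + c) j"
  by (simp add: PP_def algebra_simps)

lemma coeff_rec:
  assumes n: "n \<ge> 2"
  shows "(2 * of_nat n + 1) * (wcoef n (j+1) + (case j of 0 \<Rightarrow> 0 | Suc i \<Rightarrow> 2 * wcoef n (i+1)))
     = (of_nat n + 2) * wcoef (n+1) (j+1) + (of_nat n - 1) * wcoef (n-1) (j+1)"
proof (cases j)
  case 0
  have "wcoef m 1 = 1" if "m \<ge> 1" for m
    using wcoef_PP[OF that, of 0] by simp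
  then show ?thesis using 0 n by (simp add: algebra_simps)
next
  case (Suc i)
  define x :: rat where "x = of_nat n"
  define A where "A = PP x (-1) i"
  define B where "B = PP x (of_nat i + 1) i"
  define U where "U = PP x (of_nat i + 2) i"
  define V where "V = PP x (-2) (Suc i)"
  define Q0 :: rat where "Q0 = fact (i+1) * fact i"
  have Q: "fact (j+1) * fact j = (of_nat i + 1) * (of_nat i + 2) * Q0"
    unfolding Q0_def Suc by (simp add: algebra_simps)
  have Q0: "Q0 \<noteq> 0" unfolding Q0_def by simp
  have e1: "Q0 * wcoef n (i+1) = A * B"
    unfolding A_def B_def x_def Q0_def by (subst mult.commute) (rule wcoef_PP, use n in simp)
  have e2: "(of_nat i + 1) * (of_nat i + 2) * Q0 * wcoef n (j+1) = A * (x - 1 - of_nat i) * ((x + of_nat i + 2) * B)"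
  proof -
    have "(of_nat i + 1) * (of_nat i + 2) * Q0 * wcoef n (j+1) = wcoef n (j+1) * (fact (j+1) * fact j)"
      by (simp only: Q) (simp add: ac_simps)
    also have "\<dots> = PP (of_nat n) (-1) j * PP (of_nat n) (of_nat j + 1) j"
      by (rule wcoef_PP) (use n in simp)
    also have "\<dots> = PP x (-1) (Suc i) * PP x (of_nat (Suc i) + 1) (Suc i)"
      unfolding x_def Suc by (simp add: ac_simps)
    also have "PP x (-1) (Suc i) = A * (x - 1 - of_nat i)" unfolding A_def PP_Suc1 by simp
    also have "PP x (of_nat (Suc i) + 1) (Suc i) = (x + of_nat i + 2) * B"
      unfolding B_def PP_Suc2 by (simp add: algebra_simps)
    finally show ?thesis .
  qed
  have e3: "(of_nat i + 1) * (of_nat i + 2) * Q0 * wcoef (n+1) (j+1) = (x * A) * ((x + of_nat i + 3) * U)"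
  proof -
    have "(of_nat i + 1) * (of_nat i + 2) * Q0 * wcoef (n+1) (j+1) = wcoef (n+1) (j+1) * (fact (j+1) * fact j)"
      by (simp only: Q) (simp add: ac_simps)
    also have "\<dots> = PP (of_nat (n+1)) (-1) j * PP (of_nat (n+1)) (of_nat j + 1) j"
      by (rule wcoef_PP) (use n in simp)
    also have "\<dots> = PP (x+1) (-1) (Suc i) * PP (x+1) (of_nat (Suc i) + 1) (Suc i)"
      unfolding x_def Suc by (simp add: ac_simps)
    also have "PP (x+1) (-1) (Suc i) = x * A" unfolding A_def PP_shift PP_Suc2 by simp
    also have "PP (x+1) (of_nat (Suc i) + 1) (Suc i) = (x + of_nat i + 3) * U"
      unfolding U_def PP_shift PP_Suc2 by (simp add: algebra_simps)
    finally show ?thesis .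
  qed
  have e4: "(of_nat i + 1) * (of_nat i + 2) * Q0 * wcoef (n-1) (j+1) = V * (B * (x + 1))"
  proof -
    have xn: "(of_nat (n-1)::rat) = x + (-1)" using n unfolding x_def by (simp add: of_nat_diff)
    have "(of_nat i + 1) * (of_nat i + 2) * Q0 * wcoef (n-1) (j+1) = wcoef (n-1) (j+1) * (fact (j+1) * fact j)"
      by (simp only: Q) (simp add: ac_simps)
    also have "\<dots> = PP (of_nat (n-1)) (-1) j * PP (of_nat (n-1)) (of_nat j + 1) j"
      by (rule wcoef_PP) (use n in simp)
    also have "\<dots> = PP (x + (-1)) (-1) (Suc i) * PP (x + (-1)) (of_nat (Suc i) + 1) (Suc i)"
      unfolding xn Suc by (simp add: ac_simps)
    also have "PP (x + (-1)) (-1) (Suc i) = V" unfolding V_def PP_shift by simp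
    also have "PP (x + (-1)) (of_nat (Suc i) + 1) (Suc i) = B * (x + 1)"
      unfolding B_def PP_shift PP_Suc1 by (simp add: algebra_simps)
    finally show ?thesis .
  qed
  have fU: "(x + 2) * U = (x + of_nat i + 2) * B"
  proof -
    have "PP x (of_nat i + 2) (Suc i) = U * (x + 2)" unfolding U_def PP_Suc1 by (simp add: algebra_simps)
    moreover have "PP x (of_nat i + 2) (Suc i) = (x + of_nat i + 2) * B"
      unfolding B_def PP_Suc2 by (simp add: algebra_simps)
    ultimately show ?thesis by (simp add: mult.commute)
  qed
  have fV: "(x - 1) * V = A * (x - 1 - of_nat i) * (x - 2 - of_nat i)"
  proof -
    have "PP x (-1) (Suc (Suc i)) = (x - 1) * V" unfolding V_def PP_Suc2 by simp
    moreover have "PP x (-1) (Suc (Suc i)) = A * (x - 1 - of_nat i) * (x - 2 - of_nat i)"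
      unfolding A_def PP_Suc1 by (simp add: algebra_simps)
    ultimately show ?thesis by simp
  qed
  let ?L = "(2 * x + 1) * (wcoef n (j+1) + 2 * wcoef n (i+1))"
  let ?R = "(x + 2) * wcoef (n+1) (j+1) + (x - 1) * wcoef (n-1) (j+1)"
  have "(of_nat i + 1) * (of_nat i + 2) * Q0 * ?L =
     (2 * x + 1) * ((of_nat i + 1) * (of_nat i + 2) * Q0 * wcoef n (j+1) + 2 * (of_nat i + 1) * (of_nat i + 2) * (Q0 * wcoef n (i+1)))"
    by (simp add: algebra_simps)
  also have "\<dots> = (2 * x + 1) * (A * (x - 1 - of_nat i) * ((x + of_nat i + 2) * B) + 2 * (of_nat i + 1) * (of_nat i + 2) * (A * B))"
    by (simp only: e1 e2)
  also have "\<dots> = (x * A) * (x + of_nat i + 3) * ((x + of_nat i + 2) * B) + (A * (x - 1 - of_nat i) * (x - 2 - of_nat i)) * (B * (x + 1))"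
    by (simp add: algebra_simps)
  also have "\<dots> = (x * A) * (x + of_nat i + 3) * ((x + 2) * U) + ((x - 1) * V) * (B * (x + 1))"
    by (simp only: fU fV)
  also have "\<dots> = (x + 2) * ((x * A) * ((x + of_nat i + 3) * U)) + (x - 1) * (V * (B * (x + 1)))"
    by (simp add: algebra_simps)
  also have "\<dots> = (x + 2) * ((of_nat i + 1) * (of_nat i + 2) * Q0 * wcoef (n+1) (j+1)) + (x - 1) * ((of_nat i + 1) * (of_nat i + 2) * Q0 * wcoef (n-1) (j+1))"
    by (simp only: e3 e4)
  also have "\<dots> = (of_nat i + 1) * (of_nat i + 2) * Q0 * ?R"
    by (simp add: algebra_simps)
  finally have "?L = ?R" using Q0 by (simp add: add_pos_pos)
  then show ?thesis using Suc n unfolding x_def by (simp add: of_nat_diff)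
qed

lemma wpoly_rec:
  assumes n: "n \<ge> 2"
  shows "[:1, 2:] * smult (2 * of_nat n + 1) (wpoly n)
     = smult (of_nat n + 2) (wpoly (Suc n)) + smult (of_nat n - 1) (wpoly (n-1))"
proof (rule poly_eqI)
  fix j
  have "coeff ([:1, 2:] * smult (2 * of_nat n + 1) (wpoly n)) j
      = (2 * of_nat n + 1) * (wcoef n (j+1) + (case j of 0 \<Rightarrow> 0 | Suc i \<Rightarrow> 2 * wcoef n (i+1)))"
    using n by (cases j) (simp_all add: mult_pCons_left coeff_wpoly algebra_simps)
  also have "\<dots> = (of_nat n + 2) * wcoef (n+1) (j+1) + (of_nat n - 1) * wcoef (n-1) (j+1)"
    by (rule coeff_rec[OF n])
  also have "\<dots> = coeff (smult (of_nat n + 2) (wpoly (Suc n)) + smult (of_nat n - 1) (wpoly (n-1))) j"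
    using n by (simp add: coeff_wpoly)
  finally show "coeff ([:1, 2:] * smult (2 * of_nat n + 1) (wpoly n)) j = \<dots>" .
qed

lemma wpoly1: "wpoly 1 = 1"
  by (simp add: wpoly_def wcoef_def)

lemma wpoly2: "wpoly 2 = [:1, 2:]"
proof (rule poly_eqI)
  fix j
  show "coeff (wpoly 2) j = coeff [:1, 2:] j"
    unfolding coeff_wpoly[of 2, simplified]
    by (cases j; cases "j - 1") (simp_all add: wcoef_def numeral_eq_Suc)
qed

theorem lemma4p6:
  fixes n :: nat
  assumes "n \<ge> 1"
  shows "[:1, 2:] * (\<Sum>k = 1..n. smult (of_nat (k * (k + 1) * (2 * k + 1)) * (- 1) ^ (n - k)) ((wpoly k)\<^sup>2))
         = smult (of_nat (n * (n + 1) * (n + 2))) (wpoly n * wpoly (Suc n))"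
  using assms
proof (induction n rule: nat_induct_at_least)
  case base
  show ?case by (simp add: wpoly1[simplified] wpoly2[simplified numeral_2_eq_2])
next
  case (Suc n)
  let ?c = "\<lambda>k::nat. (of_nat (k * (k + 1) * (2 * k + 1)) :: rat)"
  let ?S = "\<lambda>n. (\<Sum>k = 1..n. smult (?c k * (- 1) ^ (n - k)) ((wpoly k)\<^sup>2))"
  define N where "N = Suc n"
  have N2: "N \<ge> 2" using Suc.hyps unfolding N_def by simp
  have split: "?S (Suc n) = smult (?c (Suc n)) ((wpoly (Suc n))\<^sup>2) - ?S n"
  proof -
    have "?S (Suc n) = (\<Sum>k = 1..n. smult (?c k * (- 1) ^ (Suc n - k)) ((wpoly k)\<^sup>2)) + smult (?c (Suc n)) ((wpoly (Suc n))\<^sup>2)"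
      by (subst sum.cl_ivl_Suc) (simp del: of_nat_mult of_nat_add of_nat_Suc)
    also have "(\<Sum>k = 1..n. smult (?c k * (- 1) ^ (Suc n - k)) ((wpoly k)\<^sup>2)) = - ?S n"
      by (simp add: sum_negf[symmetric] Suc_diff_le del: of_nat_mult of_nat_add of_nat_Suc)
    finally show ?thesis by simp
  qed
  have rec: "[:1, 2:] * smult (2 * of_nat N + 1) (wpoly N)
     = smult (of_nat N + 2) (wpoly (Suc N)) + smult (of_nat N - 1) (wpoly n)"
    using wpoly_rec[OF N2] unfolding N_def by simp
  have cN: "?c (Suc n) = of_nat N * (of_nat N + 1) * (2 * of_nat N + 1)" unfolding N_def by (simp add: algebra_simps)
  have "[:1, 2:] * ?S (Suc n) = [:1, 2:] * smult (?c (Suc n)) ((wpoly (Suc n))\<^sup>2) - [:1, 2:] * ?S n"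
    unfolding split by (simp add: algebra_simps)
  also have "[:1, 2:] * ?S n = smult (of_nat (n * (n + 1) * (n + 2))) (wpoly n * wpoly (Suc n))"
    by (rule Suc.IH)
  also have "[:1, 2:] * smult (?c (Suc n)) ((wpoly (Suc n))\<^sup>2)
      = smult (of_nat N * (of_nat N + 1)) (([:1, 2:] * smult (2 * of_nat N + 1) (wpoly N)) * wpoly N)"
    unfolding cN N_def by (simp add: power2_eq_square algebra_simps)
  also have "\<dots> = smult (of_nat N * (of_nat N + 1)) ((smult (of_nat N + 2) (wpoly (Suc N)) + smult (of_nat N - 1) (wpoly n)) * wpoly N)"
    by (simp only: rec)
  finally have eq: "[:1, 2:] * ?S (Suc n) = smult (of_nat N * (of_nat N + 1)) ((smult (of_nat N + 2) (wpoly (Suc N)) + smult (of_nat N - 1) (wpoly n)) * wpoly N) - smult (of_nat (n * (n + 1) * (n + 2))) (wpoly n * wpoly (Suc n))" .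
  have k1: "(of_nat (n * (n + 1) * (n + 2)) :: rat) = of_nat N * (of_nat N + 1) * (of_nat N - 1)"
    unfolding N_def by (simp add: algebra_simps)
  have k2: "(of_nat (Suc n * (Suc n + 1) * (Suc n + 2)) :: rat) = of_nat N * (of_nat N + 1) * (of_nat N + 2)"
    unfolding N_def by (simp add: algebra_simps)
  have "smult (of_nat N * (of_nat N + 1)) ((smult (of_nat N + 2) (wpoly (Suc N)) + smult (of_nat N - 1) (wpoly n)) * wpoly N)
      = smult (of_nat N * (of_nat N + 1) * (of_nat N + 2)) (wpoly N * wpoly (Suc N)) + smult (of_nat N * (of_nat N + 1) * (of_nat N - 1)) (wpoly n * wpoly N)"
    by (simp add: ring_distribs smult_add_right mult_smult_left mult_smult_right smult_smult ac_simps)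
  then have "[:1, 2:] * ?S (Suc n) = smult (of_nat (Suc n * (Suc n + 1) * (Suc n + 2))) (wpoly (Suc n) * wpoly (Suc (Suc n)))"
    unfolding eq k1 k2 unfolding N_def by simp
  then show ?case by simp
qed

end
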